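(* Let $a,M$ be positive integers and $\lambda=\lambda_1/\lambda_2$ with $\lambda_1,\lambda_2$ coprime integers, $\lambda_2\ge1$. Let $L_{\min}=\lambda_2\,\mathrm{lcm}(a,M)$ and $c=\gcd(a,M)=\prod_{j=1}^Jp_j^{\gamma_j}$ (prime factorization). Let $c_1=\prod_{j=1}^Jp_j^{\sigma_j}$, where $\sigma_j=\gamma_j$ if $\gcd(\lambda_2,p_j)=1$ and $\sigma_j=0$ otherwise (i.e. $c_1$ is the largest divisor of $c$ coprime to $\lambda_2$). If $L=n\,L_{\min}\,\frac{c}{c_1}$ for some $n\in\mathbb{N}$, then, with $b=L/M$, $s=\lambda b$ and $\Lambda\le\mathbb{Z}_L^2$ the subgroup generated by $(a,s)^T$ and $(0,b)^T$, the frequency shear can be chosen to be $0$; that is, there exists $s_1\in\mathbb{Z}_L$ such that $\begin{pmatrix}1&0\\ -s_1&1\end{pmatrix}\Lambda=D\mathbb{Z}_L^2$ for some diagonal matrix $D\in\mathbb{Z}_L^{2\times2}$ (equivalently, $\Lambda=U_{0,s_1}\tilde\Lambda$ for a separable lattice $\tilde\Lambda$, where $U_{s_0,s_1}=\begin{pmatrix}1&-s_0\\-s_1&s_0s_1+1\end{pmatrix}$).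
   Context: All arithmetic in $\mathbb{Z}_L=\mathbb{Z}/L\mathbb{Z}$; $A\mathbb{Z}_L^2=\{Az\bmod L:z\in\mathbb{Z}_L^2\}$ and a lattice is separable if it equals $D\mathbb{Z}_L^2$ for a diagonal $D$. In the paper's terminology, every lattice can be written as $U_{s_0,s_1}D\mathbb{Z}_L^2$ with $U_{s_0,s_1}=S_{-s_1}F^{-1}S_{s_0}F$ ($F=\begin{pmatrix}0&-1\\1&0\end{pmatrix}$, $S_c=\begin{pmatrix}1&0\\c&1\end{pmatrix}$); $s_0$ is the frequency shear and $s_1$ the time shear, and "the frequency shear can be chosen to be 0" means such a representation exists with $s_0=0$. Note $L$ of the given form is a multiple of $L_{\min}$, so $a\mid L$, $M\mid L$, and $\frac{L}{a}\lambda,\frac{L}{M}\lambda\in\mathbb{Z}$. *)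

theory Defs
  imports "HOL-Computational_Algebra.Primes"
begin

text \<open>Elements of Z_L^2 are represented by pairs of integers reduced mod L
  (canonical representatives in 0..L-1). A 2x2 matrix (p q; r t) over Z_L
  is represented by the integer quadruple (p, q, r, t).\<close>

type_synonym mat2 = "int \<times> int \<times> int \<times> int"

definition modvec :: "int \<Rightarrow> int \<times> int \<Rightarrow> int \<times> int" where
  "modvec L z = (fst z mod L, snd z mod L)"

definition mat2_apply :: "mat2 \<Rightarrow> int \<times> int \<Rightarrow> int \<times> int" where
  "mat2_apply A z = (case A of (p, q, r, t) \<Rightarrow>
      (p * fst z + q * snd z, r * fst z + t * snd z))"

definition ZL2 :: "int \<Rightarrow> (int \<times> int) set" where
  "ZL2 L = {z. 0 \<le> fst z \<and> fst z < L \<and> 0 \<le> snd z \<and> snd z < L}"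

definition mat_image :: "int \<Rightarrow> mat2 \<Rightarrow> (int \<times> int) set \<Rightarrow> (int \<times> int) set" where
  "mat_image L A S = (\<lambda>z. modvec L (mat2_apply A z)) ` S"

definition gen_subgroup :: "int \<Rightarrow> int \<times> int \<Rightarrow> int \<times> int \<Rightarrow> (int \<times> int) set" where
  "gen_subgroup L u v =
     {modvec L (k * fst u + m * fst v, k * snd u + m * snd v) | k m :: int. True}"

definition diag_lattice :: "int \<Rightarrow> int \<Rightarrow> int \<Rightarrow> (int \<times> int) set" where
  "diag_lattice L d1 d2 = mat_image L (d1, 0, 0, d2) (ZL2 L)"

definition coprime_part :: "nat \<Rightarrow> nat \<Rightarrow> nat" where
  "coprime_part c l = (\<Prod>p \<in> {p \<in> prime_factors c. coprime l p}. p ^ multiplicity p c)"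

end

theory Submission
  imports Defs
begin

lemma cp_dvd:
  assumes "c > 0" shows "coprime_part c l dvd c"
proof -
  have e: "(\<Prod>p\<in>prime_factors c. p ^ multiplicity p c) = c"
    using prod_prime_factors[of c] assms by simp
  have "coprime_part c l dvd (\<Prod>p\<in>prime_factors c. p ^ multiplicity p c)"
    unfolding coprime_part_def by (rule prod_dvd_prod_subset) auto
  then show ?thesis unfolding e .
qed

lemma cp_coprime: "coprime (coprime_part c l) l"
  unfolding coprime_part_def
  by (rule prod_coprime_left) (auto simp: coprime_commute)

lemma mm: fixes X Y s1 L :: int shows "(- s1 * (X mod L) + Y mod L) mod L = (- s1 * X + Y) mod L"
proof -
  have "(- s1 * (X mod L) + Y mod L) mod L = (- s1 * (X mod L) + Y) mod L"
    by (rule mod_add_right_eq)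
  also have "\<dots> = ((- s1 * (X mod L)) mod L + Y) mod L" by (rule mod_add_left_eq[symmetric])
  also have "(- s1 * (X mod L)) mod L = (- s1 * X) mod L" by (rule mod_mult_right_eq)
  also have "((- s1 * X) mod L + Y) mod L = (- s1 * X + Y) mod L" by (rule mod_add_left_eq)
  finally show ?thesis .
qed

lemma sep_lemma:
  fixes L A B s s1 q :: int
  assumes "s - s1 * A = B * q" and L: "L > 0"
  shows "mat_image L (1, 0, - s1, 1) (gen_subgroup L (A, s) (0, B))
           = diag_lattice L (A mod L) (B mod L)"
proof
  show "mat_image L (1, 0, - s1, 1) (gen_subgroup L (A, s) (0, B))
           \<subseteq> diag_lattice L (A mod L) (B mod L)"
  proof
    fix z assume "z \<in> mat_image L (1, 0, - s1, 1) (gen_subgroup L (A, s) (0, B))"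
    then obtain k m where z: "z = modvec L (mat2_apply (1, 0, - s1, 1) (modvec L (k * A, k * s + m * B)))"
      unfolding mat_image_def gen_subgroup_def by auto
    have z1: "fst z = (k * A) mod L" using z by (simp add: modvec_def mat2_apply_def)
    have "snd z = (- s1 * ((k * A) mod L) + (k * s + m * B) mod L) mod L"
      using z by (simp add: modvec_def mat2_apply_def)
    also have "\<dots> = (- s1 * (k * A) + (k * s + m * B)) mod L"
      by (rule mm)
    also have "- s1 * (k * A) + (k * s + m * B) = B * (k * q + m)"
    proof -
      have "- s1 * (k * A) + (k * s + m * B) = k * (s - s1 * A) + m * B"
        by (simp add: algebra_simps)
      also have "\<dots> = B * (k * q + m)"
        unfolding assms(1) by (simp add: algebra_simps)
      finally show ?thesis .
    qed
    finally have z2: "snd z = (B * (k * q + m)) mod L" .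
    have "(k mod L, (k * q + m) mod L) \<in> ZL2 L" using L by (simp add: ZL2_def)
    moreover have "z = modvec L (mat2_apply (A mod L, 0, 0, B mod L) (k mod L, (k * q + m) mod L))"
    proof -
      have "(A mod L * (k mod L) + 0 * ((k * q + m) mod L)) mod L = (k * A) mod L"
        using mod_mult_eq[of A L k] by (simp add: mult.commute)
      moreover have "(0 * (k mod L) + B mod L * ((k * q + m) mod L)) mod L = (B * (k * q + m)) mod L"
        using mod_mult_eq[of B L "k*q+m"] by simp
      ultimately show ?thesis using z1 z2 unfolding modvec_def mat2_apply_def
        by (simp add: prod_eq_iff)
    qed
    ultimately show "z \<in> diag_lattice L (A mod L) (B mod L)"
      unfolding diag_lattice_def mat_image_def by blast
  qed
next
  show "diag_lattice L (A mod L) (B mod L) \<subseteq>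
          mat_image L (1, 0, - s1, 1) (gen_subgroup L (A, s) (0, B))"
  proof
    fix z assume "z \<in> diag_lattice L (A mod L) (B mod L)"
    then obtain x y where z: "z = modvec L (mat2_apply (A mod L, 0, 0, B mod L) (x, y))"
      unfolding diag_lattice_def mat_image_def by auto
    define k where "k = x"
    define m where "m = y - x * q"
    have gm: "modvec L (k * A, k * s + m * B) \<in> gen_subgroup L (A, s) (0, B)"
      unfolding gen_subgroup_def by auto
    have e: "- s1 * (k * A) + (k * s + m * B) = B * y"
    proof -
      have "- s1 * (k * A) + (k * s + m * B) = k * (s - s1 * A) + m * B"
        by (simp add: algebra_simps)
      also have "\<dots> = B * y" unfolding assms(1) k_def m_def by (simp add: algebra_simps)
      finally show ?thesis .
    qed
    have "modvec L (mat2_apply (1, 0, - s1, 1) (modvec L (k * A, k * s + m * B)))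
       = ((k * A) mod L, (- s1 * ((k * A) mod L) + (k * s + m * B) mod L) mod L)"
      by (simp add: modvec_def mat2_apply_def)
    also have "(- s1 * ((k * A) mod L) + (k * s + m * B) mod L) mod L = (- s1 * (k * A) + (k * s + m * B)) mod L"
      by (rule mm)
    also have "\<dots> = (B * y) mod L" using e by simp
    also have "((k * A) mod L, (B * y) mod L) = z"
    proof -
      have "(A mod L * x + 0 * y) mod L = (k * A) mod L"
        using mod_mult_left_eq[of A L x] by (simp add: mult.commute k_def)
      moreover have "(0 * x + B mod L * y) mod L = (B * y) mod L"
        using mod_mult_left_eq[of B L y] by simp
      ultimately show ?thesis using z unfolding modvec_def mat2_apply_def by simp
    qed
    finally have fz: "modvec L (mat2_apply (1, 0, - s1, 1) (modvec L (k * A, k * s + m * B))) = z" .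
    show "z \<in> mat_image L (1, 0, - s1, 1) (gen_subgroup L (A, s) (0, B))"
      unfolding mat_image_def
      by (rule image_eqI[where x = "modvec L (k * A, k * s + m * B)"]) (use fz gm in auto)
  qed
qed

theorem proposition3p8:
  fixes a M lam2 n L b :: nat and lam1 s :: int
  assumes "a > 0" and "M > 0"
    and "lam2 \<ge> 1" and "coprime lam1 (int lam2)"
    and "n \<ge> 1"
    and "L = n * (lam2 * lcm a M) * (gcd a M div coprime_part (gcd a M) lam2)"
    and "b = L div M"
    and "s = lam1 * int (L div (lam2 * M))"
  shows "\<exists>s1 \<in> {0..<int L}. \<exists>d1 \<in> {0..<int L}. \<exists>d2 \<in> {0..<int L}.
           mat_image (int L) (1, 0, - s1, 1) (gen_subgroup (int L) (int a, s) (0, int b))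
             = diag_lattice (int L) d1 d2"
proof -
  define c where "c = gcd a M"
  define c1 where "c1 = coprime_part c lam2"
  have c0: "c > 0" using assms(1) c_def by simp
  have c1c: "c1 dvd c" using cp_dvd[OF c0] c1_def by simp
  have cop: "coprime c1 lam2" using cp_coprime c1_def by simp
  obtain k where ck: "c = c1 * k" using c1c by blast
  have c1pos: "c1 > 0" using ck c0 by (cases c1) auto
  have kdef: "c div c1 = k" using ck c1pos by simp
  obtain r where r: "lcm a M = M * r" by (meson dvd_lcm2 dvdE)
  have rc: "r * c = a"
  proof -
    have "lcm a M * gcd a M = a * M" by (simp add: lcm_gcd_prod)
    then have "M * (r * c) = M * a" using r c_def by (simp add: mult.commute mult.left_commute)
    then show ?thesis using assms(2) by simp
  qed
  define b' where "b' = n * r * k"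
  have L: "L = lam2 * M * b'" using assms(6) r kdef c_def c1_def b'_def by (simp add: ac_simps)
  have bb: "b = lam2 * b'" using assms(7) L assms(2) by simp
  have b'd: "L div (lam2 * M) = b'" using L assms(2,3) by simp
  have c1b: "c1 * b' = n * a" using rc ck b'_def by (simp add: ac_simps)
  have gdvd: "gcd a b dvd b'"
  proof -
    have "gcd a b dvd c1 * b'" using c1b by simp
    moreover have "gcd a b dvd lam2 * b'" using bb by simp
    ultimately have "gcd a b dvd gcd (b' * c1) (b' * lam2)" by (simp add: ac_simps)
    also have "gcd (b' * c1) (b' * lam2) = b'" using cop by (simp add: gcd_mult_distrib_nat[symmetric])
    finally show ?thesis .
  qed
  obtain w where w: "b' = gcd a b * w" using gdvd by blast
  obtain u v :: int where uv: "u * int a + v * int b = gcd (int a) (int b)" using bezout_int by blast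
  have s: "s = lam1 * int w * (u * int a + v * int b)"
    using assms(8) b'd w uv by (simp add: gcd_int_def ac_simps)
  define s1' where "s1' = lam1 * int w * u"
  define s1 where "s1 = s1' mod int L"
  have LB: "int L = int b * int M" using L bb by simp
  obtain j where j: "s1' = s1 + int L * j" using s1_def by (metis mod_div_mult_eq mult.commute)
  have seq: "s - s1 * int a = int b * (lam1 * int w * v + int M * j * int a)"
  proof -
    have "s - s1 * int a = s - (s1' - int L * j) * int a" using j by simp
    also have "\<dots> = int b * (lam1 * int w * v + int M * j * int a)"
      unfolding s s1'_def LB by (simp add: algebra_simps)
    finally show ?thesis .
  qed
  have Lpos: "int L > 0"
  proof -
    have "r > 0" using r assms(1,2) by (metis lcm_pos_nat mult_0_right neq0_conv)
    moreover have "k > 0" using ck c0 by (cases k) auto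
    ultimately show ?thesis using L assms(2,3,5) b'_def by simp
  qed
  note eq = sep_lemma[OF seq Lpos]
  show ?thesis
    apply (rule bexI[of _ s1])
     apply (rule bexI[of _ "int a mod int L"])
      apply (rule bexI[of _ "int b mod int L"])
    using eq Lpos s1_def by auto
qed

end
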